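(* Let $\mathcal{H}$ be a $k$-uniform hypergraph with vertex degrees $d_i$, and for each vertex $i$ let \[ m_{i}=\frac{\sum_{\{i,i_{2},\cdots,i_{k}\}\in E(\mathcal{H})}d_{i_{2}}\cdots d_{i_{k}}}{d_{i}^{k-1}}. \] Then \[ \rho(\mathcal{Q}(\mathcal{H}))\leq\max_{e\in E(\mathcal{H})}\max_{\{i,j\}\subseteq e}\frac{d_{i}+d_{j}+\sqrt{(d_{i}-d_{j})^{2}+4m_{i}m_{j}}}{2}. \]
   Context: A $k$-uniform hypergraph $\mathcal{H}$ on vertex set $[n]$ has edges that are $k$-element subsets of $[n]$; $d_i$ is the number of edges containing vertex $i$. The sum over $\{i,i_2,\dots,i_k\}\in E(\mathcal{H})$ runs over the edges containing $i$, with $i_2,\dots,i_k$ the other vertices of that edge. The adjacency tensor $\mathcal{A}(\mathcal{H})$ has entries $\mathcal{A}_{i_1\cdots i_k}=\frac{1}{(k-1)!}$ if $\{i_1,\dots,i_k\}\in E(\mathcal{H})$ and $0$ otherwise; $\mathcal{D}(\mathcal{H})$ is the diagonal tensor with $\mathcal{D}_{i\cdots i}=d_i$; $\mathcal{Q}(\mathcal{H})=\mathcal{D}(\mathcal{H})+\mathcal{A}(\mathcal{H})$ is the signless Laplacian tensor. For a tensor $\mathcal{T}$ and $x\in\mathbb{C}^n$, $(\mathcal{T}x)_i=\sum_{i_2,\dots,i_k}\mathcal{T}_{ii_2\cdots i_k}x_{i_2}\cdots x_{i_k}$; $\lambda$ is an eigenvalue if $\mathcal{T}x=\lambda x^{[k-1]}$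 for some nonzero $x$, where $x^{[k-1]}=(x_1^{k-1},\dots,x_n^{k-1})^T$; $\rho(\mathcal{T})$ is the maximum modulus of eigenvalues. *)

theory Defs
  imports "HOL-Analysis.Analysis"
begin

text \<open>A k-uniform hypergraph on vertex set {0..<n} (standing for [n]) with edge set E.\<close>
definition uniform_hypergraph :: "nat \<Rightarrow> nat \<Rightarrow> nat set set \<Rightarrow> bool" where
  "uniform_hypergraph n k E \<longleftrightarrow> (\<forall>e\<in>E. e \<subseteq> {..<n} \<and> card e = k)"

definition hdeg :: "nat set set \<Rightarrow> nat \<Rightarrow> nat" where
  "hdeg E i = card {e \<in> E. i \<in> e}"

text \<open>Tensors of order k and dimension n: functions on index lists (of length k, entries < n).\<close>
type_synonym tensor = "nat list \<Rightarrow> real"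

definition adj_tensor :: "nat \<Rightarrow> nat set set \<Rightarrow> tensor" where
  "adj_tensor k E is = (if length is = k \<and> set is \<in> E then 1 / fact (k - 1) else 0)"

definition deg_tensor :: "nat \<Rightarrow> nat set set \<Rightarrow> tensor" where
  "deg_tensor k E is = (if length is = k \<and> is \<noteq> [] \<and> (\<forall>j\<in>set is. j = hd is)
                         then real (hdeg E (hd is)) else 0)"

definition signless_laplacian_tensor :: "nat \<Rightarrow> nat set set \<Rightarrow> tensor" where
  "signless_laplacian_tensor k E is = deg_tensor k E is + adj_tensor k E is"

definition tensor_apply :: "nat \<Rightarrow> nat \<Rightarrow> tensor \<Rightarrow> (nat \<Rightarrow> complex) \<Rightarrow> nat \<Rightarrow> complex" where
  "tensor_apply n k T x i =
     (\<Sum>is \<in> {is. length is = k - 1 \<and> set is \<subseteq> {..<n}}.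
        complex_of_real (T (i # is)) * (\<Prod>j\<leftarrow>is. x j))"

definition tensor_eigenvalue :: "nat \<Rightarrow> nat \<Rightarrow> tensor \<Rightarrow> complex \<Rightarrow> bool" where
  "tensor_eigenvalue n k T mu \<longleftrightarrow>
     (\<exists>x. (\<exists>i<n. x i \<noteq> 0) \<and> (\<forall>i<n. tensor_apply n k T x i = mu * x i ^ (k - 1)))"

definition tensor_spectral_radius :: "nat \<Rightarrow> nat \<Rightarrow> tensor \<Rightarrow> real" where
  "tensor_spectral_radius n k T = Sup {cmod mu | mu. tensor_eigenvalue n k T mu}"

definition mval :: "nat \<Rightarrow> nat set set \<Rightarrow> nat \<Rightarrow> real" where
  "mval k E i = (\<Sum>e \<in> {e \<in> E. i \<in> e}. \<Prod>j \<in> e - {i}. real (hdeg E j))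
                 / real (hdeg E i) ^ (k - 1)"

definition pair_bound :: "nat \<Rightarrow> nat set set \<Rightarrow> nat \<Rightarrow> nat \<Rightarrow> real" where
  "pair_bound k E i j = (real (hdeg E i) + real (hdeg E j)
      + sqrt ((real (hdeg E i) - real (hdeg E j))^2 + 4 * mval k E i * mval k E j)) / 2"

end

theory Submission
  imports Defs "HOL-Combinatorics.Multiset_Permutations" "Jordan_Normal_Form.Char_Poly"
begin

lemma tensor_formula:
  assumes U: "uniform_hypergraph n k E" and k: "k \<ge> 2" and i: "i < n"
  shows "tensor_apply n k (signless_laplacian_tensor k E) x i =
     complex_of_real (real (hdeg E i)) * x i ^ (k - 1)
     + (\<Sum>e\<in>{e\<in>E. i \<in> e}. \<Prod>j\<in>e - {i}. x j)"
proof -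
  define L where "L = {is. length is = k - 1 \<and> set is \<subseteq> {..<n}}"
  have finL: "finite L" unfolding L_def
    using finite_lists_length_eq[of "{..<n}" "k-1"] by (simp add: conj_commute)
  have finE: "finite E"
  proof (rule finite_subset[of E "Pow {..<n}"])
    show "E \<subseteq> Pow {..<n}" using U unfolding uniform_hypergraph_def by auto
  qed simp
  have "tensor_apply n k (signless_laplacian_tensor k E) x i =
     (\<Sum>is\<in>L. complex_of_real (deg_tensor k E (i#is)) * (\<Prod>j\<leftarrow>is. x j))
   + (\<Sum>is\<in>L. complex_of_real (adj_tensor k E (i#is)) * (\<Prod>j\<leftarrow>is. x j))"
    unfolding tensor_apply_def signless_laplacian_tensor_def L_def
    by (simp add: sum.distrib distrib_right)
  also have "(\<Sum>is\<in>L. complex_of_real (deg_tensor k E (i#is)) * (\<Prod>j\<leftarrow>is. x j))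
      = (\<Sum>is\<in>L. if is = replicate (k-1) i then complex_of_real (real (hdeg E i)) * x i ^ (k - 1) else 0)"
  proof (rule sum.cong[OF refl])
    fix "is" assume "is \<in> L"
    hence len: "length is = k - 1" unfolding L_def by auto
    have "(\<forall>j\<in>set is. j = i) = (is = replicate (k-1) i)"
      using len by (metis replicate_length_same in_set_replicate)
    moreover have "length (i#is) = k" using len k by simp
    ultimately show "complex_of_real (deg_tensor k E (i#is)) * (\<Prod>j\<leftarrow>is. x j) =
      (if is = replicate (k-1) i then complex_of_real (real (hdeg E i)) * x i ^ (k - 1) else 0)"
      unfolding deg_tensor_def by (auto simp: prod_list_replicate)
  qed
  also have "\<dots> = complex_of_real (real (hdeg E i)) * x i ^ (k - 1)"
  proof -
    have "replicate (k-1) i \<in> L" unfolding L_def using i by auto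
    thus ?thesis using finL by (simp add: sum.delta)
  qed
  also have "(\<Sum>is\<in>L. complex_of_real (adj_tensor k E (i#is)) * (\<Prod>j\<leftarrow>is. x j))
      = (\<Sum>is\<in>{is\<in>L. set (i#is) \<in> E}. complex_of_real (1 / fact (k-1)) * (\<Prod>j\<leftarrow>is. x j))"
  proof -
    have "(\<Sum>is\<in>L. complex_of_real (adj_tensor k E (i#is)) * (\<Prod>j\<leftarrow>is. x j))
       = (\<Sum>is\<in>L. if set (i#is) \<in> E then complex_of_real (1 / fact (k-1)) * (\<Prod>j\<leftarrow>is. x j) else 0)"
      by (rule sum.cong[OF refl]) (use k in \<open>auto simp: adj_tensor_def L_def\<close>)
    thus ?thesis using finL by (simp only: sum.inter_filter)
  qed
  also have "{is\<in>L. set (i#is) \<in> E} = (\<Union>e\<in>{e\<in>E. i \<in> e}. permutations_of_set (e - {i}))"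
  proof safe
    fix "is" assume a: "is \<in> L" "set (i#is) \<in> E"
    have ck: "card (set (i#is)) = k" using a U unfolding uniform_hypergraph_def by blast
    have len: "length (i#is) = k" using a k unfolding L_def by auto
    have d: "distinct (i#is)" using ck len card_distinct by metis
    show "is \<in> (\<Union>e\<in>{e\<in>E. i \<in> e}. permutations_of_set (e - {i}))"
      using a d by (intro UN_I[of "set (i#is)"]) (auto simp: permutations_of_set_def)
  next
    fix "is" e assume a: "e \<in> E" "i \<in> e" "is \<in> permutations_of_set (e - {i})"
    have ce: "card e = k" "e \<subseteq> {..<n}" using a U unfolding uniform_hypergraph_def by auto
    have fe: "finite e" using ce k card.infinite by fastforce
    have "length is = card (e - {i})" using a distinct_card unfolding permutations_of_set_def by fastforce
    also have "\<dots> = k - 1" using ce fe a by simp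
    finally show "is \<in> L" using a ce unfolding L_def permutations_of_set_def by auto
    have "set (i#is) = e" using a unfolding permutations_of_set_def by auto
    thus "set (i#is) \<in> E" using a by simp
  qed
  also have "(\<Sum>is\<in>(\<Union>e\<in>{e\<in>E. i \<in> e}. permutations_of_set (e - {i})). complex_of_real (1 / fact (k-1)) * (\<Prod>j\<leftarrow>is. x j))
     = (\<Sum>e\<in>{e\<in>E. i \<in> e}. \<Sum>is\<in>permutations_of_set (e - {i}). complex_of_real (1 / fact (k-1)) * (\<Prod>j\<leftarrow>is. x j))"
  proof (rule sum.UNION_disjoint)
    show "finite {e\<in>E. i \<in> e}" using finE by simp
    show "\<forall>e\<in>{e\<in>E. i \<in> e}. finite (permutations_of_set (e - {i}))" by simp
    show "\<forall>e\<in>{e\<in>E. i \<in> e}. \<forall>e'\<in>{e\<in>E. i \<in> e}. e \<noteq> e' \<longrightarrow>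
        permutations_of_set (e - {i}) \<inter> permutations_of_set (e' - {i}) = {}"
    proof (intro ballI impI)
      fix e e' assume a: "e \<in> {e\<in>E. i \<in> e}" "e' \<in> {e\<in>E. i \<in> e}" "e \<noteq> e'"
      have "e - {i} \<noteq> e' - {i}" using a by (metis insert_Diff mem_Collect_eq)
      thus "permutations_of_set (e - {i}) \<inter> permutations_of_set (e' - {i}) = {}"
        unfolding permutations_of_set_def by auto
    qed
  qed
  also have "\<dots> = (\<Sum>e\<in>{e\<in>E. i \<in> e}. \<Prod>j\<in>e - {i}. x j)"
  proof (rule sum.cong[OF refl])
    fix e assume a: "e \<in> {e\<in>E. i \<in> e}"
    have ce: "card e = k" using a U unfolding uniform_hypergraph_def by auto
    have fe: "finite e" using ce k card.infinite by fastforce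
    have c1: "card (e - {i}) = k - 1" using ce fe a by simp
    have "(\<Sum>is\<in>permutations_of_set (e - {i}). complex_of_real (1 / fact (k-1)) * (\<Prod>j\<leftarrow>is. x j))
       = (\<Sum>is\<in>permutations_of_set (e - {i}). complex_of_real (1 / fact (k-1)) * (\<Prod>j\<in>e - {i}. x j))"
    proof (rule sum.cong[OF refl])
      fix "is" assume "is \<in> permutations_of_set (e - {i})"
      hence "distinct is" "set is = e - {i}" unfolding permutations_of_set_def by auto
      thus "complex_of_real (1 / fact (k-1)) * (\<Prod>j\<leftarrow>is. x j) = complex_of_real (1 / fact (k-1)) * (\<Prod>j\<in>e - {i}. x j)"
        by (metis prod.distinct_set_conv_list)
    qed
    also have "\<dots> = of_nat (fact (k-1)) * (complex_of_real (1 / fact (k-1)) * (\<Prod>j\<in>e - {i}. x j))"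
      using fe c1 by simp
    also have "\<dots> = (\<Prod>j\<in>e - {i}. x j)"
    proof -
      have "(of_nat (fact (k-1)) :: complex) * complex_of_real (1 / fact (k-1)) = 1"
      proof -
        have "(of_nat (fact (k-1)) :: complex) = complex_of_real (fact (k-1))" by simp
        moreover have "(fact (k-1) :: real) * (1 / fact (k-1)) = 1" by simp
        ultimately show ?thesis by (metis of_real_mult of_real_1)
      qed
      thus ?thesis by (metis mult.assoc mult_1)
    qed
    finally show "(\<Sum>is\<in>permutations_of_set (e - {i}). complex_of_real (1 / fact (k-1)) * (\<Prod>j\<leftarrow>is. x j)) = (\<Prod>j\<in>e - {i}. x j)" .
  qed
  finally show ?thesis .
qed

lemma arith_bound:
  fixes a dp dq M al be :: real
  assumes "0 \<le> dp" "0 \<le> dq" "0 \<le> M" "a - dp \<le> al" "a - dq \<le> be" "0 \<le> al" "0 \<le> be"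
    "al * be \<le> M"
  shows "a \<le> (dp + dq + sqrt ((dp - dq)^2 + 4 * M)) / 2"
proof -
  have "\<bar>dp - dq\<bar> = sqrt ((dp - dq)^2)" by simp
  also have "\<dots> \<le> sqrt ((dp - dq)^2 + 4 * M)" by (rule real_sqrt_le_mono) (use assms(3) in simp)
  finally have sq: "\<bar>dp - dq\<bar> \<le> sqrt ((dp - dq)^2 + 4 * M)" .
  show ?thesis
  proof (cases "a \<le> dp \<or> a \<le> dq")
    case True thus ?thesis using sq by (auto simp: abs_if split: if_splits)
  next
    case False
    hence "(a - dp) * (a - dq) \<le> al * be" using assms by (intro mult_mono) auto
    hence h: "(2*a - dp - dq)^2 \<le> (dp - dq)^2 + 4 * M" using assms(8)
      by (simp add: power2_eq_square algebra_simps)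
    have "2*a - dp - dq = sqrt ((2*a - dp - dq)^2)" using False by simp
    also have "\<dots> \<le> sqrt ((dp - dq)^2 + 4 * M)" using h real_sqrt_le_mono by blast
    finally show ?thesis by simp
  qed
qed

lemma mval_nonneg: "0 \<le> mval k E i"
  unfolding mval_def by (intro divide_nonneg_nonneg sum_nonneg prod_nonneg) auto

lemma pair_bound_nonneg: "0 \<le> pair_bound k E i j"
  unfolding pair_bound_def using mval_nonneg[of k E i] mval_nonneg[of k E j]
  by (intro divide_nonneg_nonneg add_nonneg_nonneg) auto

lemma finite_E: "uniform_hypergraph n k E \<Longrightarrow> finite E"
  by (rule finite_subset[of E "Pow {..<n}"]) (auto simp: uniform_hypergraph_def)

lemma hdeg_pos: "uniform_hypergraph n k E \<Longrightarrow> e \<in> E \<Longrightarrow> j \<in> e \<Longrightarrow> hdeg E j > 0"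
  unfolding hdeg_def using finite_E[of n k E] by (subst card_gt_0_iff) auto

lemma key:
  assumes U: "uniform_hypergraph n k E" and k: "k \<ge> 2" and i: "i < n" and di: "hdeg E i > 0"
    and eq: "tensor_apply n k (signless_laplacian_tensor k E) x i = \<mu> * x i ^ (k - 1)"
    and c: "c \<ge> 0"
    and bnd: "\<And>e j. e \<in> E \<Longrightarrow> i \<in> e \<Longrightarrow> j \<in> e - {i} \<Longrightarrow> cmod (x j) \<le> real (hdeg E j) * c"
  shows "cmod (\<mu> - of_real (real (hdeg E i))) * cmod (x i) ^ (k - 1)
          \<le> mval k E i * real (hdeg E i) ^ (k - 1) * c ^ (k - 1)"
proof -
  let ?Ei = "{e\<in>E. i \<in> e}"
  have finEi: "finite ?Ei" using finite_E[OF U] by simp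
  have "(\<mu> - of_real (real (hdeg E i))) * x i ^ (k - 1) = (\<Sum>e\<in>?Ei. \<Prod>j\<in>e - {i}. x j)"
    using eq tensor_formula[OF U k i, of x] by (simp add: algebra_simps)
  hence "cmod (\<mu> - of_real (real (hdeg E i))) * cmod (x i) ^ (k - 1)
      = cmod (\<Sum>e\<in>?Ei. \<Prod>j\<in>e - {i}. x j)" by (metis norm_mult norm_power)
  also have "\<dots> \<le> (\<Sum>e\<in>?Ei. cmod (\<Prod>j\<in>e - {i}. x j))" by (rule norm_sum)
  also have "\<dots> = (\<Sum>e\<in>?Ei. \<Prod>j\<in>e - {i}. cmod (x j))" by (simp add: prod_norm)
  also have "\<dots> \<le> (\<Sum>e\<in>?Ei. \<Prod>j\<in>e - {i}. real (hdeg E j) * c)"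
    by (intro sum_mono prod_mono) (use bnd in auto)
  also have "\<dots> = (\<Sum>e\<in>?Ei. (\<Prod>j\<in>e - {i}. real (hdeg E j)) * c ^ (k - 1))"
  proof (rule sum.cong[OF refl])
    fix e assume a: "e \<in> ?Ei"
    have ce: "card e = k" using a U unfolding uniform_hypergraph_def by auto
    have fe: "finite e" using ce k card.infinite by fastforce
    have c1: "card (e - {i}) = k - 1" using ce fe a by simp
    show "(\<Prod>j\<in>e - {i}. real (hdeg E j) * c) = (\<Prod>j\<in>e - {i}. real (hdeg E j)) * c ^ (k - 1)"
      by (simp add: prod.distrib c1)
  qed
  also have "\<dots> = mval k E i * real (hdeg E i) ^ (k - 1) * c ^ (k - 1)"
  proof -
    have "mval k E i * real (hdeg E i) ^ (k - 1) = (\<Sum>e\<in>?Ei. \<Prod>j\<in>e - {i}. real (hdeg E j))"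
      unfolding mval_def using di by simp
    thus ?thesis by (simp add: sum_distrib_right)
  qed
  finally show ?thesis .
qed

lemma ev_exists_2:
  assumes n: "n > 0"
  shows "\<exists>\<mu>. tensor_eigenvalue n 2 T \<mu>"
proof -
  define A :: "complex Matrix.mat" where "A = Matrix.mat n n (\<lambda>(i,j). complex_of_real (T [i,j]))"
  have A: "A \<in> carrier_mat n n" unfolding A_def by simp
  have "degree (char_poly A) = n" using degree_monic_char_poly[OF A] by simp
  hence "\<not> constant (poly (char_poly A))" using n constant_degree[of "char_poly A"] by simp
  then obtain z where "poly (char_poly A) z = 0" using fundamental_theorem_of_algebra by blast
  hence "eigenvalue A z" using eigenvalue_root_char_poly[OF A] by simp
  then obtain v where v: "v \<in> carrier_vec n" "v \<noteq> 0\<^sub>v n" "A *\<^sub>v v = z \<cdot>\<^sub>v v"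
    unfolding eigenvalue_def eigenvector_def using A by auto
  define x where "x j = v $ j" for j
  have nz: "\<exists>i<n. x i \<noteq> 0"
  proof (rule ccontr)
    assume "\<not> ?thesis"
    hence "v = 0\<^sub>v n" using v(1) unfolding x_def by (intro eq_vecI) auto
    thus False using v(2) by simp
  qed
  have "tensor_apply n 2 T x i = z * x i ^ (2 - 1)" if i: "i < n" for i
  proof -
    have L: "{is. length is = 2 - 1 \<and> set is \<subseteq> {..<n}} = (\<lambda>j. [j]) ` {..<n}"
    proof safe
      fix "is" :: "nat list" assume "length is = 2 - 1" "set is \<subseteq> {..<n}"
      then obtain j where "is = [j]" "j < n" by (cases "is") auto
      thus "is \<in> (\<lambda>j. [j]) ` {..<n}" by auto
    qed auto
    have "tensor_apply n 2 T x i = (\<Sum>j<n. complex_of_real (T [i,j]) * v $ j)"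
      unfolding tensor_apply_def L by (subst sum.reindex) (auto simp: inj_on_def x_def)
    also have "\<dots> = (A *\<^sub>v v) $ i"
      using i v(1) A unfolding A_def by (auto simp: scalar_prod_def lessThan_atLeast0 intro!: sum.cong)
    also have "\<dots> = z * x i" using v(3) v(1) i unfolding x_def by simp
    finally show ?thesis by simp
  qed
  thus ?thesis unfolding tensor_eigenvalue_def using nz by blast
qed


lemma two_elems:
  assumes "card e \<ge> 2" "p \<in> e" shows "\<exists>q\<in>e. q \<noteq> p"
proof (rule ccontr)
  assume "\<not> ?thesis"
  hence "e \<subseteq> {p}" by auto
  moreover have "finite e" using assms(1) card.infinite by fastforce
  ultimately have "card e \<le> card {p}" by (intro card_mono) auto
  hence "card e \<le> 1" by simp
  thus False using assms(1) by simp
qed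

lemma norm_sub_real: "cmod \<mu> - t \<le> cmod (\<mu> - complex_of_real t)" if "t \<ge> 0"
  using norm_triangle_ineq[of "\<mu> - complex_of_real t" "complex_of_real t"] that by simp

lemma ev_bound:
  assumes U: "uniform_hypergraph n k E" and k: "k \<ge> 2" and Ene: "E \<noteq> {}"
    and ev: "tensor_eigenvalue n k (signless_laplacian_tensor k E) \<mu>"
  shows "\<exists>e p q. e \<in> E \<and> p \<in> e \<and> q \<in> e \<and> p \<noteq> q \<and> cmod \<mu> \<le> pair_bound k E p q"
proof -
  obtain x where nz: "\<exists>i<n. x i \<noteq> 0"
    and eq: "\<And>i. i < n \<Longrightarrow> tensor_apply n k (signless_laplacian_tensor k E) x i = \<mu> * x i ^ (k - 1)"
    using ev unfolding tensor_eigenvalue_def by blast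
  have cardE: "\<And>e. e \<in> E \<Longrightarrow> card e = k" and subE: "\<And>e. e \<in> E \<Longrightarrow> e \<subseteq> {..<n}"
    using U unfolding uniform_hypergraph_def by auto
  define d where "d j = real (hdeg E j)" for j
  define r where "r j = cmod (x j) / d j" for j
  define V where "V = {j. j < n \<and> hdeg E j > 0}"
  have finV: "finite V" unfolding V_def by simp
  show ?thesis
  proof (cases "\<exists>j\<in>V. x j \<noteq> 0")
    case True
    then obtain j1 where j1: "j1 \<in> V" "x j1 \<noteq> 0" by blast
    have "Max (r ` V) \<in> r ` V" using finV j1 by (intro Max_in) auto
    then obtain p where pV: "p \<in> V" and pM: "Max (r ` V) = r p" by blast
    have pmax: "r j \<le> r p" if "j \<in> V" for j
      using Max_ge[of "r ` V" "r j"] finV that pM by simp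
    have "r j1 > 0" using j1 unfolding r_def d_def V_def by auto
    hence rp: "r p > 0" using pmax[OF j1(1)] by simp
    have "card {e\<in>E. p \<in> e} > 0" using pV unfolding V_def hdeg_def by simp
    hence "{e\<in>E. p \<in> e} \<noteq> {}" by (intro notI) simp
    then obtain e0 where e0: "e0 \<in> E" "p \<in> e0" by blast
    then obtain j0 where j0: "j0 \<in> e0" "j0 \<noteq> p" using two_elems[of e0 p] cardE k by fastforce
    define N where "N = {j. \<exists>e\<in>E. p \<in> e \<and> j \<in> e \<and> j \<noteq> p}"
    have NV: "N \<subseteq> V" unfolding N_def V_def using subE hdeg_pos[OF U] by blast
    hence finN: "finite N" using finV finite_subset by blast
    have "j0 \<in> N" unfolding N_def using e0 j0 by blast
    hence "Max (r ` N) \<in> r ` N" using finN by (intro Max_in) auto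
    then obtain q where qN: "q \<in> N" and qM: "Max (r ` N) = r q" by blast
    have qmax: "r j \<le> r q" if "j \<in> N" for j
      using Max_ge[of "r ` N" "r j"] finN that qM by simp
    obtain e where e: "e \<in> E" "p \<in> e" "q \<in> e" "q \<noteq> p" using qN unfolding N_def by blast
    have qV: "q \<in> V" using qN NV by blast
    have dpos: "\<And>j. j \<in> V \<Longrightarrow> d j > 0" unfolding V_def d_def by auto
    have cx: "\<And>j. j \<in> V \<Longrightarrow> cmod (x j) = d j * r j" unfolding r_def using dpos by fastforce
    have rnn: "\<And>j. r j \<ge> 0" unfolding r_def d_def by simp
    define al where "al = cmod (\<mu> - of_real (d p))"
    define be where "be = cmod (\<mu> - of_real (d q))"
    define m where "m j = mval k E j" for j
    have gen: "cmod (\<mu> - of_real (d i)) * r i ^ (k - 1) \<le> m i * c ^ (k - 1)"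
      if iV: "i \<in> V" and c: "c \<ge> 0" and nb: "\<And>e j. e \<in> E \<Longrightarrow> i \<in> e \<Longrightarrow> j \<in> e - {i} \<Longrightarrow> r j \<le> c"
      for i c
    proof -
      have bnd: "cmod (x j) \<le> real (hdeg E j) * c" if "e \<in> E" "i \<in> e" "j \<in> e - {i}" for e j
      proof -
        have jV: "j \<in> V" unfolding V_def using that subE hdeg_pos[OF U] by blast
        have "cmod (x j) = d j * r j" using cx[OF jV] .
        also have "\<dots> \<le> d j * c" using nb[OF that] dpos[OF jV] by simp
        finally show ?thesis unfolding d_def .
      qed
      have iV2: "i < n" "hdeg E i > 0" using iV unfolding V_def by auto
      have k1: "cmod (\<mu> - of_real (d i)) * cmod (x i) ^ (k - 1) \<le> m i * d i ^ (k - 1) * c ^ (k - 1)"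
        using key[OF U k iV2 eq[OF iV2(1)] c bnd] unfolding d_def m_def .
      have cxp: "cmod (x i) ^ (k - 1) = d i ^ (k - 1) * r i ^ (k - 1)"
        using cx[OF iV] by (simp add: power_mult_distrib)
      have "(cmod (\<mu> - of_real (d i)) * r i ^ (k - 1)) * d i ^ (k - 1) \<le> (m i * c ^ (k - 1)) * d i ^ (k - 1)"
        using k1 unfolding cxp by (simp add: mult_ac)
      moreover have dd: "d i ^ (k - 1) > 0" using dpos[OF iV] by simp
      ultimately show ?thesis using mult_le_cancel_right_pos[OF dd] by simp
    qed
    have hp: "al * r p ^ (k - 1) \<le> m p * r q ^ (k - 1)"
      unfolding al_def
    proof (rule gen[OF pV rnn])
      fix e' j assume "e' \<in> E" "p \<in> e'" "j \<in> e' - {p}"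
      hence "j \<in> N" unfolding N_def by blast
      thus "r j \<le> r q" by (rule qmax)
    qed
    have hq: "be * r q ^ (k - 1) \<le> m q * r p ^ (k - 1)"
      unfolding be_def
    proof (rule gen[OF qV rnn])
      fix e' j assume "e' \<in> E" "q \<in> e'" "j \<in> e' - {q}"
      hence "j \<in> V" unfolding V_def using subE hdeg_pos[OF U] by blast
      thus "r j \<le> r p" by (rule pmax)
    qed
    have alnn: "al \<ge> 0" "be \<ge> 0" unfolding al_def be_def by auto
    have mnn: "\<And>j. m j \<ge> 0" unfolding m_def by (rule mval_nonneg)
    have prod: "al * be \<le> m p * m q"
    proof (cases "r q = 0")
      case True
      have z0: "(0::real) ^ (k - 1) = 0" using k by simp
      have "al * r p ^ (k - 1) \<le> 0" using hp True z0 by (metis mult_zero_right)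
      moreover have pp: "r p ^ (k - 1) > 0" using rp by simp
      ultimately have "al \<le> 0" using mult_le_cancel_right_pos[OF pp, of al 0] by simp
      hence "al = 0" using alnn by simp
      thus ?thesis using mnn by simp
    next
      case False
      hence rq: "r q > 0" using rnn[of q] by simp
      have "(al * r p ^ (k - 1)) * (be * r q ^ (k - 1)) \<le> (m p * r q ^ (k - 1)) * (m q * r p ^ (k - 1))"
        by (rule mult_mono[OF hp hq]) (use mnn rnn alnn in auto)
      hence "(al * be) * (r p ^ (k - 1) * r q ^ (k - 1)) \<le> (m p * m q) * (r p ^ (k - 1) * r q ^ (k - 1))"
        by (simp add: mult_ac)
      moreover have pq: "r p ^ (k - 1) * r q ^ (k - 1) > 0" using rp rq by simp
      ultimately show ?thesis using mult_le_cancel_right_pos[OF pq, of "al * be" "m p * m q"] by simp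
    qed
    have "cmod \<mu> \<le> (d p + d q + sqrt ((d p - d q)^2 + 4 * (m p * m q))) / 2"
    proof (rule arith_bound[OF _ _ _ _ _ alnn prod])
      show "0 \<le> d p" "0 \<le> d q" unfolding d_def by auto
      show "0 \<le> m p * m q" using mnn by simp
      show "cmod \<mu> - d p \<le> al" unfolding al_def by (rule norm_sub_real) (simp add: d_def)
      show "cmod \<mu> - d q \<le> be" unfolding be_def by (rule norm_sub_real) (simp add: d_def)
    qed
    hence "cmod \<mu> \<le> pair_bound k E p q" unfolding pair_bound_def d_def m_def by (simp add: mult.assoc)
    thus ?thesis using e by blast
  next
    case False
    from nz obtain i where i: "i < n" "x i \<noteq> 0" by blast
    hence "hdeg E i = 0" using False unfolding V_def by auto
    hence Ei0: "{e\<in>E. i \<in> e} = {}" unfolding hdeg_def using finite_E[OF U] by simp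
    have "tensor_apply n k (signless_laplacian_tensor k E) x i = 0"
      using tensor_formula[OF U k i(1), of x, unfolded Ei0] \<open>hdeg E i = 0\<close> by simp
    hence "\<mu> * x i ^ (k - 1) = 0" using eq[OF i(1)] by simp
    hence mu0: "\<mu> = 0" using i by simp
    obtain e where e: "e \<in> E" using Ene by blast
    have "e \<noteq> {}" using cardE[OF e] k by auto
    then obtain p where "p \<in> e" by blast
    note ep = e this
    then obtain q where "q \<in> e" "q \<noteq> p" using two_elems[of e p] cardE k by fastforce
    thus ?thesis using ep mu0 pair_bound_nonneg[of k E p q] by auto
  qed
qed

theorem corollary2p3:
  fixes n k :: nat and E :: "nat set set"
  assumes "uniform_hypergraph n k E" and "k \<ge> 2" and "E \<noteq> {}"
  shows "tensor_spectral_radius n k (signless_laplacian_tensor k E)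
           \<le> Max {pair_bound k E i j | e i j. e \<in> E \<and> i \<in> e \<and> j \<in> e \<and> i \<noteq> j}"
proof -
  let ?Q = "signless_laplacian_tensor k E"
  let ?B = "{pair_bound k E i j | e i j. e \<in> E \<and> i \<in> e \<and> j \<in> e \<and> i \<noteq> j}"
  have U: "uniform_hypergraph n k E" by fact
  have cardE: "\<And>e. e \<in> E \<Longrightarrow> card e = k" and subE: "\<And>e. e \<in> E \<Longrightarrow> e \<subseteq> {..<n}"
    using U unfolding uniform_hypergraph_def by auto
  have finB: "finite ?B"
  proof (rule finite_subset)
    show "?B \<subseteq> (\<lambda>(i,j). pair_bound k E i j) ` ({..<n} \<times> {..<n})"
    proof
      fix b assume "b \<in> ?B"
      then obtain e i j where h: "b = pair_bound k E i j" "e \<in> E" "i \<in> e" "j \<in> e" by blast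
      have "i < n" "j < n" using subE[OF h(2)] h(3,4) by auto
      thus "b \<in> (\<lambda>(i,j). pair_bound k E i j) ` ({..<n} \<times> {..<n})"
        using h(1) by (intro image_eqI[of _ _ "(i,j)"]) auto
    qed
  qed simp
  have bnd: "s \<le> Max ?B" if "s \<in> {cmod mu | mu. tensor_eigenvalue n k ?Q mu}" for s
  proof -
    from that obtain mu where s: "s = cmod mu" and ev: "tensor_eigenvalue n k ?Q mu" by blast
    from ev_bound[OF U assms(2,3) ev] obtain e p q where
      h: "e \<in> E" "p \<in> e" "q \<in> e" "p \<noteq> q" "cmod mu \<le> pair_bound k E p q" by blast
    have "pair_bound k E p q \<in> ?B" using h by blast
    hence "pair_bound k E p q \<le> Max ?B" using finB by (rule Max_ge[rotated])
    thus ?thesis using h s by simp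
  qed
  obtain e0 where e0: "e0 \<in> E" using assms(3) by blast
  have "e0 \<noteq> {}" using cardE[OF e0] assms(2) by auto
  then obtain j where "j \<in> e0" by blast
  hence n: "n > 0" using subE[OF e0] by auto
  have "\<exists>mu. tensor_eigenvalue n k ?Q mu"
  proof (cases "k = 2")
    case True thus ?thesis using ev_exists_2[OF n] by simp
  next
    case False
    hence k3: "k \<ge> 3" using assms(2) by simp
    define x :: "nat \<Rightarrow> complex" where "x j = (if j = 0 then 1 else 0)" for j
    have "tensor_apply n k ?Q x i = complex_of_real (real (hdeg E 0)) * x i ^ (k - 1)" if i: "i < n" for i
    proof -
      have z: "(\<Prod>j\<in>e - {i}. x j) = 0" if "e \<in> {e\<in>E. i \<in> e}" for e
      proof -
        have ce: "card e = k" using that cardE by auto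
        have fe: "finite e" by (rule card_ge_0_finite) (use ce assms(2) in simp)
        have c1: "card (e - {i}) \<ge> 2" using ce fe that k3 by (simp add: card_Diff_singleton)
        have "e - {i} \<noteq> {}" using c1 by (intro notI) simp
        then obtain a where a: "a \<in> e - {i}" by blast
        obtain b where b: "b \<in> e - {i}" "b \<noteq> a" using two_elems[OF c1 a] by blast
        have "\<exists>c\<in>e - {i}. x c = 0"
        proof (cases "a = 0")
          case True
          hence "b \<noteq> 0" using b by simp
          thus ?thesis using b(1) unfolding x_def by auto
        next
          case False
          thus ?thesis using a unfolding x_def by auto
        qed
        thus ?thesis using fe by (intro prod_zero) auto
      qed
      have "(\<Sum>e\<in>{e\<in>E. i \<in> e}. \<Prod>j\<in>e - {i}. x j) = 0"
        by (rule sum.neutral) (use z in blast)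
      hence "tensor_apply n k ?Q x i = complex_of_real (real (hdeg E i)) * x i ^ (k - 1)"
        using tensor_formula[OF U assms(2) i, of x] by simp
      also have "\<dots> = complex_of_real (real (hdeg E 0)) * x i ^ (k - 1)"
      proof (cases "i = 0")
        case False
        hence "x i ^ (k - 1) = 0" using k3 unfolding x_def by simp
        thus ?thesis by simp
      qed simp
      finally show ?thesis .
    qed
    moreover have "\<exists>i<n. x i \<noteq> 0" using n unfolding x_def by auto
    ultimately show ?thesis unfolding tensor_eigenvalue_def by blast
  qed
  hence ne: "{cmod mu | mu. tensor_eigenvalue n k ?Q mu} \<noteq> {}" by blast
  show ?thesis unfolding tensor_spectral_radius_def
    by (rule cSup_least[OF ne]) (rule bnd)
qed

end
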